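(* Let $b_{10}>0$, $b_{11}\ge0$, $c_{01}\ge0$, $c_{11}\ge0$, and define $\gamma'=\frac{c_{01}}{b_{10}}$, $\delta'=\frac{b_{10}-b_{11}+c_{11}-c_{01}}{b_{10}}$. Let $\mathcal{F}=\{(P_{11},t): P_{11}\in[0,1],\ P_{11}-1\le t\le P_{11}\}$ and $\mathcal{P}=\{(P_{11},t)\in\mathcal{F}: t>\gamma'+\delta'P_{11}\}$. Then $\mathcal{P}$ contains a pair $(P_{11},t)$ with $t<0$ if and only if $c_{11}<b_{11}-b_{10}$.
   Context: Double binary causal classification: $P_{11}$ is the probability of the positive outcome under the positive treatment, $t=P_{11}-P_{10}$ the estimated individual treatment effect, $b_{ij}$ the benefit of outcome $i$ under treatment $j$ and $c_{ij}$ the cost of outcome $i$ under treatment $j$, normalized so that $c_{00}=c_{10}=0$, $b_{00}=b_{01}=0$. The cost-sensitive causal decision boundary is $t=\gamma'+\delta'P_{11}$ and $\mathcal{P}$ is the positive treatment set. *)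

theory Defs
  imports Complex_Main
begin

definition gamma' :: "real \<Rightarrow> real \<Rightarrow> real" where
  "gamma' b10 c01 = c01 / b10"

definition delta' :: "real \<Rightarrow> real \<Rightarrow> real \<Rightarrow> real \<Rightarrow> real" where
  "delta' b10 b11 c01 c11 = (b10 - b11 + c11 - c01) / b10"

definition feasible_region :: "(real \<times> real) set" where
  "feasible_region = {(p, t). 0 \<le> p \<and> p \<le> 1 \<and> p - 1 \<le> t \<and> t \<le> p}"

definition pos_treatment_set :: "real \<Rightarrow> real \<Rightarrow> real \<Rightarrow> real \<Rightarrow> (real \<times> real) set" where
  "pos_treatment_set b10 b11 c01 c11 =
     {(p, t) \<in> feasible_region. t > gamma' b10 c01 + delta' b10 b11 c01 c11 * p}"

end

theory Submission
  imports Defs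
begin

theorem theorem3:
  fixes b10 b11 c01 c11 :: real
  assumes "b10 > 0" and "b11 \<ge> 0" and "c01 \<ge> 0" and "c11 \<ge> 0"
  shows "(\<exists>p t. (p, t) \<in> pos_treatment_set b10 b11 c01 c11 \<and> t < 0) \<longleftrightarrow> c11 < b11 - b10"
proof
  assume "\<exists>p t. (p, t) \<in> pos_treatment_set b10 b11 c01 c11 \<and> t < 0"
  then obtain p t where h: "0 \<le> p" "p \<le> 1" "p - 1 \<le> t" "t \<le> p" "t < 0"
    and g: "t > c01 / b10 + (b10 - b11 + c11 - c01) / b10 * p"
    by (auto simp: pos_treatment_set_def feasible_region_def gamma'_def delta'_def)
  have "b10 * t > c01 + (b10 - b11 + c11 - c01) * p"
    using g assms(1) by (simp add: field_simps)
  hence v: "c01 * (1 - p) + (b10 - b11 + c11) * p < 0"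
  proof -
    have "b10 * t < 0" using h assms(1) by (simp add: mult_pos_neg)
    moreover have "c01 + (b10 - b11 + c11 - c01) * p = c01 * (1 - p) + (b10 - b11 + c11) * p"
      by (simp add: algebra_simps)
    ultimately show ?thesis using \<open>b10 * t > _\<close> by linarith
  qed
  show "c11 < b11 - b10"
  proof (rule ccontr)
    assume "\<not> ?thesis"
    hence "(b10 - b11 + c11) * p \<ge> 0" using h by simp
    moreover have "c01 * (1 - p) \<ge> 0" using h assms by simp
    ultimately show False using v by linarith
  qed
next
  assume a: "c11 < b11 - b10"
  define q where "q = b11 - b10 - c11"
  have q: "q > 0" using a q_def by simp
  define p where "p = (2*c01 + q/2) / (2*c01 + q)"
  have den: "2*c01 + q > 0" using q assms by simp
  have p0: "p \<ge> 0" using den q assms by (simp add: p_def)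
  have p1: "p < 1" using den q by (simp add: p_def field_simps)
  define v where "v = c01 * (1 - p) - q * p"
  have "v = q * (-3*c01/2 - q/2) / (2*c01 + q)"
  proof -
    have "1 - p = (q/2) / (2*c01 + q)" using den by (simp add: p_def field_simps)
    thus ?thesis using den unfolding v_def p_def by (simp add: divide_simps) (simp add: algebra_simps)
  qed
  moreover have "q * (-3*c01/2 - q/2) < 0" using q assms by (simp add: mult_pos_neg)
  ultimately have vneg: "v < 0" using den by (simp add: divide_neg_pos)
  define m where "m = max (p - 1) (v / b10)"
  have mneg: "m < 0" using p1 vneg assms(1) by (simp add: m_def divide_neg_pos)
  define t where "t = m / 2"
  have eq: "c01 / b10 + (b10 - b11 + c11 - c01) / b10 * p = v / b10"
  proof -
    have "c01 + (b10 - b11 + c11 - c01) * p = v" by (simp add: v_def q_def algebra_simps)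
    hence "c01 / b10 + (b10 - b11 + c11 - c01) / b10 * p = (c01 + (b10 - b11 + c11 - c01) * p) / b10"
      by (simp add: add_divide_distrib[symmetric])
    thus ?thesis using \<open>_ = v\<close> by simp
  qed
  have "(p, t) \<in> pos_treatment_set b10 b11 c01 c11 \<and> t < 0"
  proof -
    have m1: "p - 1 \<le> m" "v / b10 \<le> m" by (simp_all add: m_def)
    have "p - 1 \<le> t" "t \<le> p" "t < 0" "t > v / b10"
      using m1 mneg p0 unfolding t_def by linarith+
    thus ?thesis using p0 p1 eq
      by (simp add: pos_treatment_set_def feasible_region_def gamma'_def delta'_def)
  qed
  thus "\<exists>p t. (p, t) \<in> pos_treatment_set b10 b11 c01 c11 \<and> t < 0" by blast
qed

end
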